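(* Let $X=\mathbb{Z}$, $\beta\in Sym(X)$ the translation $x\mapsto x+1$, and $n,m\geq1$. Let $c=c(a_1,\dots,a_n,b)$ be a nontrivial cyclically reduced word in the free group $\mathbb{F}_{n+1}=\langle a_1,\dots,a_n,b\rangle$ with exponent sum of $b$ equal to zero, and $d=d(a'_1,\dots,a'_m,b')$ a nontrivial cyclically reduced word in $\mathbb{F}_{m+1}=\langle a'_1,\dots,a'_m,b'\rangle$ with exponent sum of $b'$ equal to zero. Let $\alpha=(\alpha_1,\dots,\alpha_n)\in Sym(X)^n$ be such that, for the action of $\mathbb{F}_{n+1}$ on $X$ given by $a_i\mapsto\alpha_i$, $b\mapsto\beta$, and with $c$ acting as $c(\alpha_1,\dots,\alpha_n,\beta)$: the action is faithful and transitive; for every $w\in\mathbb{F}_{n+1}\setminus\langle c\rangle$ there are infinitely many $x$ with $cx=x$, $cwx=wx$, $wx\neq x$; there is a Følner sequence $(A_k)_{k\geq1}$ for this action consisting of pairwise disjoint sets with $|A_k|=k$, each pointwise fixed by $c$; for every $k\geq1$ there are infinitely many $\langle c\rangle$-orbits of size $k$; every $\langle c\rangle$-orbit is finite; and every finite index subgroup of $\mathbb{F}_{n+1}$ acts transitively. Let $\alpha'=(\alpha'_1,\dots,\alpha'_m)\in Sym(X)^m$ satisfy the same properties for $\mathbb{F}_{m+1}$ (via $a'_j\mapsto\alpha'_j$, $b'\mapsto\beta$) and $d$, with Følner sequence $(B_k)_{k\geq1}$. Let $Z=\{\sigma\in Sym(X):\sigma\, c(\alpha,\beta)=d(\alpha',\beta)\,\sigma\}$,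 a closed subset of $Sym(X)$ (topology of pointwise convergence). For $\sigma\in Z$, let $\Gamma=\mathbb{F}_{n+1}\ast_{c=d}\mathbb{F}_{m+1}$ act on $X$ by $g\cdot x=g(\alpha,\beta)x$ for $g\in\mathbb{F}_{n+1}$ and $h\cdot x=\sigma^{-1}h(\alpha',\beta)\sigma x$ for $h\in\mathbb{F}_{m+1}$. Then the set $\mathcal{O}_1=\{\sigma\in Z:\text{this action of }\Gamma\text{ on }X\text{ is faithful}\}$ is generic in $Z$.
   Context: A subset of a Baire space is meagre if it is a countable union of closed sets with empty interior, and generic (dense $G_\delta$) if its complement is meagre. $Z$ is closed in the Polish space $Sym(X)$, hence a Baire space. A sequence $(A_k)$ of finite non-empty subsets is Følner for an action of $\Gamma$ if $|A_k\triangle gA_k|/|A_k|\to0$ for all $g\in\Gamma$. $\mathbb{F}_{n+1}\ast_{c=d}\mathbb{F}_{m+1}$ denotes the amalgamated free product identifying $\langle c\rangle$ with $\langle d\rangle$ via $c\mapsto d$. *)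

theory Defs
  imports "HOL-Analysis.Analysis"
begin

text \<open>A letter is a pair (generator, sign); sign True means the generator itself,
  False its inverse.  Words are lists of letters; the word l1 l2 ... lk acts on X
  as the composition of the letters, the rightmost letter acting first.\<close>

type_synonym 'g letter = "'g \<times> bool"

definition inv_letter :: "'g letter \<Rightarrow> 'g letter" where
  "inv_letter l = (fst l, \<not> snd l)"

definition inv_word :: "'g letter list \<Rightarrow> 'g letter list" where
  "inv_word w = rev (map inv_letter w)"

definition words_over :: "'g set \<Rightarrow> 'g letter list set" where
  "words_over S = {w. fst ` set w \<subseteq> S}"

definition reduced :: "'g letter list \<Rightarrow> bool" where
  "reduced w \<longleftrightarrow> (\<forall>i. Suc i < length w \<longrightarrow> w ! Suc i \<noteq> inv_letter (w ! i))"

definition cyc_reduced :: "'g letter list \<Rightarrow> bool" where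
  "cyc_reduced w \<longleftrightarrow> reduced w \<and> (w \<noteq> [] \<longrightarrow> last w \<noteq> inv_letter (hd w))"

definition exp_sum :: "'g \<Rightarrow> 'g letter list \<Rightarrow> int" where
  "exp_sum g w = sum_list (map (\<lambda>(h, s). if h = g then (if s then 1 else -1) else 0) w)"

definition fr_step :: "'g letter list \<Rightarrow> 'g letter list \<Rightarrow> bool" where
  "fr_step u v \<longleftrightarrow> (\<exists>p s l. u = p @ [l, inv_letter l] @ s \<and> v = p @ s)"

definition fr_eq :: "'g letter list \<Rightarrow> 'g letter list \<Rightarrow> bool" where
  "fr_eq = (\<lambda>u v. fr_step u v \<or> fr_step v u)\<^sup>*\<^sup>*"

definition in_cyclic :: "'g letter list \<Rightarrow> 'g letter list \<Rightarrow> bool" where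
  "in_cyclic c w \<longleftrightarrow> (\<exists>k::nat. fr_eq w (concat (replicate k c)) \<or>
                                fr_eq w (concat (replicate k (inv_word c))))"

definition is_subgroup :: "'g set \<Rightarrow> 'g letter list set \<Rightarrow> bool" where
  "is_subgroup S H \<longleftrightarrow> H \<subseteq> words_over S \<and> [] \<in> H \<and>
     (\<forall>u\<in>H. \<forall>v\<in>H. u @ v \<in> H) \<and> (\<forall>u\<in>H. inv_word u \<in> H) \<and>
     (\<forall>u\<in>H. \<forall>v\<in>words_over S. fr_eq u v \<longrightarrow> v \<in> H)"

definition finite_index :: "'g set \<Rightarrow> 'g letter list set \<Rightarrow> bool" where
  "finite_index S H \<longleftrightarrow>
     finite (words_over S // {(u, v). u \<in> words_over S \<and> v \<in> words_over S \<and> inv_word u @ v \<in> H})"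

definition beta :: "int \<Rightarrow> int" where
  "beta x = x + 1"

definition letter_perm :: "('g \<Rightarrow> int \<Rightarrow> int) \<Rightarrow> 'g letter \<Rightarrow> int \<Rightarrow> int" where
  "letter_perm \<rho> l = (if snd l then \<rho> (fst l) else inv (\<rho> (fst l)))"

definition eval_word :: "('g \<Rightarrow> int \<Rightarrow> int) \<Rightarrow> 'g letter list \<Rightarrow> int \<Rightarrow> int" where
  "eval_word \<rho> w = foldr (\<lambda>l f. letter_perm \<rho> l \<circ> f) w id"

text \<open>Generators of F_{N+1}: a_i (index i < N) acts by alpha i, b (index N) by beta.\<close>

definition fgen :: "nat \<Rightarrow> (nat \<Rightarrow> int \<Rightarrow> int) \<Rightarrow> nat \<Rightarrow> int \<Rightarrow> int" where
  "fgen N \<alpha> i = (if i < N then \<alpha> i else beta)"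

definition cyc_orbit :: "(int \<Rightarrow> int) \<Rightarrow> int \<Rightarrow> int set" where
  "cyc_orbit p x = {y. \<exists>k::nat. y = (p ^^ k) x \<or> y = (inv p ^^ k) x}"

definition good_action :: "nat \<Rightarrow> (nat \<Rightarrow> int \<Rightarrow> int) \<Rightarrow> nat letter list \<Rightarrow> bool" where
  "good_action N \<rho> c \<longleftrightarrow>
    (let W = words_over {..N}; ev = eval_word \<rho>; pc = ev c in
      \<comment> \<open>faithful\<close>
      (\<forall>w\<in>W. ev w = id \<longrightarrow> fr_eq w []) \<and>
      \<comment> \<open>transitive\<close>
      (\<forall>x y. \<exists>w\<in>W. ev w x = y) \<and>
      (\<forall>w\<in>W. \<not> in_cyclic c w \<longrightarrow>
          infinite {x. pc x = x \<and> pc (ev w x) = ev w x \<and> ev w x \<noteq> x}) \<and>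
      \<comment> \<open>Foelner sequence (A k), k \<ge> 1\<close>
      (\<exists>A :: nat \<Rightarrow> int set.
          (\<forall>k\<ge>1. finite (A k) \<and> card (A k) = k \<and> (\<forall>x\<in>A k. pc x = x)) \<and>
          (\<forall>k l. 1 \<le> k \<longrightarrow> 1 \<le> l \<longrightarrow> k \<noteq> l \<longrightarrow> A k \<inter> A l = {}) \<and>
          (\<forall>w\<in>W. (\<lambda>k. real (card ((A (Suc k) - ev w ` A (Suc k)) \<union> (ev w ` A (Suc k) - A (Suc k))))
                        / real (card (A (Suc k)))) \<longlonglongrightarrow> 0)) \<and>
      (\<forall>k\<ge>1. infinite {Orb. \<exists>x. Orb = cyc_orbit pc x \<and> card Orb = k}) \<and>
      (\<forall>x. finite (cyc_orbit pc x)) \<and>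
      (\<forall>H. is_subgroup {..N} H \<and> finite_index {..N} H \<longrightarrow> (\<forall>x y. \<exists>w\<in>H. ev w x = y)))"

text \<open>Generators Inl i (i \<le> n) of the first factor, Inr j (j \<le> m) of the second.
  Equality in the amalgam: congruence generated by free cancellation and c = d.\<close>

definition emb_l :: "nat letter list \<Rightarrow> (nat + nat) letter list" where
  "emb_l w = map (\<lambda>(g, s). (Inl g, s)) w"

definition emb_r :: "nat letter list \<Rightarrow> (nat + nat) letter list" where
  "emb_r w = map (\<lambda>(g, s). (Inr g, s)) w"

definition amal_step :: "nat letter list \<Rightarrow> nat letter list \<Rightarrow>
    (nat + nat) letter list \<Rightarrow> (nat + nat) letter list \<Rightarrow> bool" where
  "amal_step c d u v \<longleftrightarrow> fr_step u v \<or>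
     (\<exists>p s. u = p @ emb_l c @ s \<and> v = p @ emb_r d @ s)"

definition amal_eq :: "nat letter list \<Rightarrow> nat letter list \<Rightarrow>
    (nat + nat) letter list \<Rightarrow> (nat + nat) letter list \<Rightarrow> bool" where
  "amal_eq c d = (\<lambda>u v. amal_step c d u v \<or> amal_step c d v u)\<^sup>*\<^sup>*"

definition gamma_gen :: "(nat \<Rightarrow> int \<Rightarrow> int) \<Rightarrow> (nat \<Rightarrow> int \<Rightarrow> int) \<Rightarrow> (int \<Rightarrow> int)
    \<Rightarrow> nat + nat \<Rightarrow> int \<Rightarrow> int" where
  "gamma_gen \<rho> \<rho>' \<sigma> g = (case g of Inl i \<Rightarrow> \<rho> i | Inr j \<Rightarrow> inv \<sigma> \<circ> \<rho>' j \<circ> \<sigma>)"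

definition gamma_faithful :: "nat \<Rightarrow> nat \<Rightarrow> (nat \<Rightarrow> int \<Rightarrow> int) \<Rightarrow> (nat \<Rightarrow> int \<Rightarrow> int)
    \<Rightarrow> nat letter list \<Rightarrow> nat letter list \<Rightarrow> (int \<Rightarrow> int) \<Rightarrow> bool" where
  "gamma_faithful n m \<rho> \<rho>' c d \<sigma> \<longleftrightarrow>
     (\<forall>W\<in>words_over (Inl ` {..n} \<union> Inr ` {..m}).
        eval_word (gamma_gen \<rho> \<rho>' \<sigma>) W = id \<longrightarrow> amal_eq c d W [])"

definition symtop :: "(int \<Rightarrow> int) topology" where
  "symtop = subtopology (product_topology (\<lambda>_::int. discrete_topology (UNIV::int set)) UNIV)
                        {\<sigma>. bij \<sigma>}"

definition generic_in :: "'a topology \<Rightarrow> 'a set \<Rightarrow> bool" where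
  "generic_in T S \<longleftrightarrow> S \<subseteq> topspace T \<and>
     (\<exists>F :: nat \<Rightarrow> 'a set. (\<forall>k. closedin T (F k) \<and> T interior_of (F k) = {}) \<and>
         topspace T - S = (\<Union>k. F k))"

end

theory Submission
  imports Defs
begin

lemma nbhd_open:
  fixes \<sigma> :: "int \<Rightarrow> int"
  assumes "finite F"
  shows "openin (product_topology (\<lambda>_::int. discrete_topology (UNIV::int set)) UNIV) {f. \<forall>x\<in>F. f x = \<sigma> x}"
proof -
  have eq: "{f. \<forall>x\<in>F. f x = \<sigma> x} = PiE UNIV (\<lambda>x. if x \<in> F then {\<sigma> x} else UNIV)"
    by (auto simp: PiE_def Pi_def split: if_splits)
  have "{i. (if i \<in> F then {\<sigma> i} else UNIV) \<noteq> (UNIV::int set)} \<subseteq> F" by auto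
  then have "finite {i. (if i \<in> F then {\<sigma> i} else UNIV) \<noteq> (UNIV::int set)}"
    using assms finite_subset by blast
  then show ?thesis unfolding eq by (subst openin_PiE_gen) auto
qed

lemma symtop_sub: "subtopology symtop Z = subtopology (product_topology (\<lambda>_::int. discrete_topology (UNIV::int set)) UNIV) ({\<sigma>. bij \<sigma>} \<inter> Z)"
  unfolding symtop_def by (simp add: subtopology_subtopology)

lemma topspace_symZ: "Z \<subseteq> {\<sigma>. bij \<sigma>} \<Longrightarrow> topspace (subtopology symtop Z) = Z"
  unfolding symtop_sub by auto

lemma open_nbhd:
  assumes "openin (subtopology symtop Z) U" "\<sigma> \<in> U"
  shows "\<exists>F. finite F \<and> (\<forall>\<sigma>'\<in>Z. bij \<sigma>' \<longrightarrow> (\<forall>x\<in>F. \<sigma>' x = \<sigma> x) \<longrightarrow> \<sigma>' \<in> U)"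
proof -
  obtain T where T: "openin (product_topology (\<lambda>_::int. discrete_topology (UNIV::int set)) UNIV) T"
    "U = T \<inter> ({\<sigma>. bij \<sigma>} \<inter> Z)"
    using assms(1) unfolding symtop_sub openin_subtopology by blast
  then have "\<sigma> \<in> T" using assms(2) by auto
  then obtain V where V: "finite {i. V i \<noteq> (UNIV::int set)}" "\<sigma> \<in> PiE UNIV V" "PiE UNIV V \<subseteq> T"
    using T(1) unfolding openin_product_topology_alt by auto
  show ?thesis
  proof (intro exI conjI ballI impI)
    show "finite {i. V i \<noteq> UNIV}" by fact
    fix \<sigma>' assume "\<sigma>' \<in> Z" "bij \<sigma>'" "\<forall>x\<in>{i. V i \<noteq> UNIV}. \<sigma>' x = \<sigma> x"
    then have "\<sigma>' \<in> PiE UNIV V" using V(2) by (auto simp: PiE_def Pi_def) (metis UNIV_I)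
    then show "\<sigma>' \<in> U" using V(3) T(2) \<open>\<sigma>' \<in> Z\<close> \<open>bij \<sigma>'\<close> by auto
  qed
qed

lemma nbhd_openin:
  assumes "S \<subseteq> Z" "Z \<subseteq> {\<sigma>. bij \<sigma>}"
    and "\<forall>\<sigma>\<in>S. \<exists>F. finite F \<and> (\<forall>\<sigma>'\<in>Z. (\<forall>x\<in>F. \<sigma>' x = \<sigma> x) \<longrightarrow> \<sigma>' \<in> S)"
  shows "openin (subtopology symtop Z) S"
proof -
  obtain Fs where Fs: "\<forall>\<sigma>\<in>S. finite (Fs \<sigma>) \<and> (\<forall>\<sigma>'\<in>Z. (\<forall>x\<in>Fs \<sigma>. \<sigma>' x = \<sigma> x) \<longrightarrow> \<sigma>' \<in> S)"
    using assms(3) by metis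
  let ?T = "\<Union>\<sigma>\<in>S. {f. \<forall>x\<in>Fs \<sigma>. f x = \<sigma> x}"
  have "openin (product_topology (\<lambda>_::int. discrete_topology (UNIV::int set)) UNIV) ?T"
    using Fs nbhd_open by (intro openin_Union) auto
  moreover have "S = ?T \<inter> ({\<sigma>. bij \<sigma>} \<inter> Z)"
    using Fs assms(1,2) by auto
  ultimately show ?thesis unfolding symtop_sub openin_subtopology by blast
qed

lemma eval_Nil[simp]: "eval_word \<rho> [] = id"
  by (simp add: eval_word_def)

lemma eval_Cons[simp]: "eval_word \<rho> (l # w) = letter_perm \<rho> l \<circ> eval_word \<rho> w"
  by (simp add: eval_word_def)

lemma eval_append[simp]: "eval_word \<rho> (u @ v) = eval_word \<rho> u \<circ> eval_word \<rho> v"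
  by (induction u) (auto simp: comp_assoc)

lemma inv_letter_inv[simp]: "inv_letter (inv_letter l) = l"
  by (simp add: inv_letter_def)

lemma letter_inv_cancel:
  assumes "\<forall>g. bij (\<rho> g)"
  shows "letter_perm \<rho> l \<circ> letter_perm \<rho> (inv_letter l) = id"
proof -
  obtain a b where l: "l = (a,b)" by (cases l)
  have "\<rho> a \<circ> inv (\<rho> a) = id" "inv (\<rho> a) \<circ> \<rho> a = id"
    using assms by (metis bij_is_surj surj_iff, metis bij_is_inj inj_iff)
  then show ?thesis by (auto simp: l letter_perm_def inv_letter_def)
qed

lemma fr_step_eval:
  assumes "\<forall>g. bij (\<rho> g)" "fr_step u v"
  shows "eval_word \<rho> u = eval_word \<rho> v"
proof -
  obtain p s l where "u = p @ [l, inv_letter l] @ s" "v = p @ s"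
    using assms(2) unfolding fr_step_def by blast
  then show ?thesis using letter_inv_cancel[OF assms(1), of l]
    by (simp add: comp_assoc) (metis comp_assoc comp_id)
qed

lemma fr_eq_eval:
  assumes "\<forall>g. bij (\<rho> g)" "fr_eq u v"
  shows "eval_word \<rho> u = eval_word \<rho> v"
  using assms(2) unfolding fr_eq_def
  by (induction rule: rtranclp_induct) (auto dest: fr_step_eval[OF assms(1)])

lemma sym_rtranclp:
  assumes "\<And>x y. R x y \<Longrightarrow> R y x" "R\<^sup>*\<^sup>* u v" shows "R\<^sup>*\<^sup>* v u"
  using assms(2) by (induction rule: rtranclp_induct)
    (auto intro: converse_rtranclp_into_rtranclp assms(1))

lemma fr_eq_refl[simp]: "fr_eq u u" by (simp add: fr_eq_def)
lemma fr_eq_sym: "fr_eq u v \<Longrightarrow> fr_eq v u"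
  unfolding fr_eq_def by (rule sym_rtranclp) auto
lemma fr_eq_trans: "fr_eq u v \<Longrightarrow> fr_eq v w \<Longrightarrow> fr_eq u w"
  unfolding fr_eq_def by simp

declare fr_eq_trans [trans]

lemma fr_step_ctx: "fr_step u v \<Longrightarrow> fr_step (p @ u @ s) (p @ v @ s)"
  unfolding fr_step_def by (metis append.assoc)

lemma fr_eq_ctx: "fr_eq u v \<Longrightarrow> fr_eq (p @ u @ s) (p @ v @ s)"
  unfolding fr_eq_def
proof (induction rule: rtranclp_induct)
  case (step y z)
  then show ?case using fr_step_ctx by (metis (mono_tags) rtranclp.rtrancl_into_rtrancl)
qed simp

lemma fr_eq_app: "fr_eq u u' \<Longrightarrow> fr_eq v v' \<Longrightarrow> fr_eq (u @ v) (u' @ v')"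
  using fr_eq_ctx[of u u' "[]" v] fr_eq_ctx[of v v' u' "[]"] fr_eq_trans by auto

lemma fr_eq_one: "fr_eq ([l, inv_letter l] @ s) s"
  unfolding fr_eq_def fr_step_def by (rule r_into_rtranclp) (metis append_Nil)

lemma inv_word_Cons[simp]: "inv_word (l # w) = inv_word w @ [inv_letter l]"
  by (simp add: inv_word_def)
lemma inv_word_Nil[simp]: "inv_word [] = []"
  by (simp add: inv_word_def)

lemma fr_eq_w_inv: "fr_eq (w @ inv_word w) []"
proof (induction w)
  case (Cons l w)
  have "fr_eq ((l # w) @ inv_word (l # w)) ([l] @ (w @ inv_word w) @ [inv_letter l])" by simp
  also have "fr_eq \<dots> ([l] @ [] @ [inv_letter l])" by (rule fr_eq_ctx[OF Cons])
  also have "fr_eq \<dots> []" using fr_eq_one[of l "[]"] by simp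
  finally show ?case .
qed simp

lemma fr_eq_inv_w: "fr_eq (inv_word w @ w) []"
proof (induction w)
  case (Cons l w)
  have "fr_eq (inv_word (l # w) @ (l # w)) (inv_word w @ ([inv_letter l, inv_letter (inv_letter l)] @ w))" by simp
  also have "fr_eq \<dots> (inv_word w @ w @ [])"
    using fr_eq_ctx[OF fr_eq_one[of "inv_letter l" w], of "inv_word w" "[]"] by simp
  also have "fr_eq \<dots> []" using Cons by simp
  finally show ?case .
qed simp

lemma amal_eq_refl[simp]: "amal_eq c d u u" by (simp add: amal_eq_def)
lemma amal_eq_sym: "amal_eq c d u v \<Longrightarrow> amal_eq c d v u"
  unfolding amal_eq_def by (rule sym_rtranclp) auto
lemma amal_eq_trans[trans]: "amal_eq c d u v \<Longrightarrow> amal_eq c d v w \<Longrightarrow> amal_eq c d u w"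
  unfolding amal_eq_def by simp

lemma amal_step_ctx: "amal_step c d u v \<Longrightarrow> amal_step c d (p @ u @ s) (p @ v @ s)"
  unfolding amal_step_def using fr_step_ctx by (metis append.assoc)

lemma amal_eq_ctx: "amal_eq c d u v \<Longrightarrow> amal_eq c d (p @ u @ s) (p @ v @ s)"
  unfolding amal_eq_def
proof (induction rule: rtranclp_induct)
  case (step y z)
  show ?case by (rule rtranclp.rtrancl_into_rtrancl[OF step.IH]) (use step.hyps(2) amal_step_ctx in blast)
qed simp

lemma amal_eq_app: "amal_eq c d u u' \<Longrightarrow> amal_eq c d v v' \<Longrightarrow> amal_eq c d (u @ v) (u' @ v')"
  using amal_eq_ctx[of c d u u' "[]" v] amal_eq_ctx[of c d v v' u' "[]"] amal_eq_trans by auto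

lemma fr_eq_amal: "fr_eq u v \<Longrightarrow> amal_eq c d u v"
  unfolding fr_eq_def amal_eq_def
proof (induction rule: rtranclp_induct)
  case (step y z)
  show ?case by (rule rtranclp.rtrancl_into_rtrancl[OF step.IH]) (use step.hyps(2) in \<open>auto simp: amal_step_def\<close>)
qed simp

lemma emb_l_simps[simp]: "emb_l [] = []" "emb_l (l # w) = (Inl (fst l), snd l) # emb_l w"
  "emb_l (u @ v) = emb_l u @ emb_l v"
  by (auto simp: emb_l_def split: prod.splits)
lemma emb_r_simps[simp]: "emb_r [] = []" "emb_r (l # w) = (Inr (fst l), snd l) # emb_r w"
  "emb_r (u @ v) = emb_r u @ emb_r v"
  by (auto simp: emb_r_def split: prod.splits)

lemma emb_l_inv: "emb_l (inv_word w) = inv_word (emb_l w)"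
  by (induction w) (auto simp: inv_letter_def)
lemma emb_r_inv: "emb_r (inv_word w) = inv_word (emb_r w)"
  by (induction w) (auto simp: inv_letter_def)

lemma emb_l_fr_step: "fr_step u v \<Longrightarrow> fr_step (emb_l u) (emb_l v)"
proof -
  assume "fr_step u v"
  then obtain p s l where "u = p @ [l, inv_letter l] @ s" "v = p @ s" unfolding fr_step_def by blast
  then have "emb_l u = emb_l p @ [(Inl (fst l), snd l), inv_letter (Inl (fst l), snd l)] @ emb_l s"
    "emb_l v = emb_l p @ emb_l s" by (auto simp: inv_letter_def)
  then show ?thesis unfolding fr_step_def by blast
qed
lemma emb_r_fr_step: "fr_step u v \<Longrightarrow> fr_step (emb_r u) (emb_r v)"
proof -
  assume "fr_step u v"
  then obtain p s l where "u = p @ [l, inv_letter l] @ s" "v = p @ s" unfolding fr_step_def by blast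
  then have "emb_r u = emb_r p @ [(Inr (fst l), snd l), inv_letter (Inr (fst l), snd l)] @ emb_r s"
    "emb_r v = emb_r p @ emb_r s" by (auto simp: inv_letter_def)
  then show ?thesis unfolding fr_step_def by blast
qed

lemma emb_l_fr_eq: "fr_eq u v \<Longrightarrow> fr_eq (emb_l u) (emb_l v)"
  unfolding fr_eq_def
proof (induction rule: rtranclp_induct)
  case (step y z)
  show ?case by (rule rtranclp.rtrancl_into_rtrancl[OF step.IH]) (use step.hyps(2) emb_l_fr_step in blast)
qed simp
lemma emb_r_fr_eq: "fr_eq u v \<Longrightarrow> fr_eq (emb_r u) (emb_r v)"
  unfolding fr_eq_def
proof (induction rule: rtranclp_induct)
  case (step y z)
  show ?case by (rule rtranclp.rtrancl_into_rtrancl[OF step.IH]) (use step.hyps(2) emb_r_fr_step in blast)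
qed simp

lemma amal_cd: "amal_eq c d (emb_l c) (emb_r d)"
  unfolding amal_eq_def amal_step_def
  by (rule r_into_rtranclp) (metis append_Nil append_Nil2)

lemma emb_l_pow: "emb_l (concat (replicate k w)) = concat (replicate k (emb_l w))"
  by (induction k) auto
lemma emb_r_pow: "emb_r (concat (replicate k w)) = concat (replicate k (emb_r w))"
  by (induction k) auto

lemma amal_pow: "amal_eq c d u v \<Longrightarrow> amal_eq c d (concat (replicate k u)) (concat (replicate k v))"
  by (induction k) (auto intro: amal_eq_app)

lemma amal_cd_inv: "amal_eq c d (emb_l (inv_word c)) (emb_r (inv_word d))"
proof -
  define C where "C = emb_l c"
  define D where "D = emb_r d"
  have 1: "fr_eq (inv_word C @ (D @ inv_word D) @ []) (inv_word C @ [] @ [])"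
    by (rule fr_eq_ctx) (rule fr_eq_w_inv)
  have 2: "amal_eq c d (inv_word C @ C @ inv_word D) (inv_word C @ D @ inv_word D)"
    by (rule amal_eq_ctx) (simp add: C_def D_def amal_cd)
  have 3: "fr_eq ([] @ (inv_word C @ C) @ inv_word D) ([] @ [] @ inv_word D)"
    by (rule fr_eq_ctx) (rule fr_eq_inv_w)
  have "amal_eq c d (inv_word C) (inv_word C @ D @ inv_word D)"
    using amal_eq_sym[OF fr_eq_amal[OF 1]] by simp
  also have "amal_eq c d \<dots> (inv_word C @ C @ inv_word D)"
    using amal_eq_sym[OF 2] .
  also have "amal_eq c d \<dots> (inv_word D)"
    using fr_eq_amal[OF 3] by simp
  finally show ?thesis by (simp add: emb_l_inv emb_r_inv C_def D_def)
qed

lemma words_over_pow: "w \<in> words_over S \<Longrightarrow> concat (replicate k w) \<in> words_over S"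
  by (induction k) (auto simp: words_over_def)
lemma words_over_inv: "w \<in> words_over S \<Longrightarrow> inv_word w \<in> words_over S"
  by (auto simp: words_over_def inv_word_def inv_letter_def)

lemma transfer_lr:
  assumes "in_cyclic c z" "d \<in> words_over S"
  shows "\<exists>z'. z' \<in> words_over S \<and> in_cyclic d z' \<and> amal_eq c d (emb_l z) (emb_r z')"
proof -
  obtain k where "fr_eq z (concat (replicate k c)) \<or> fr_eq z (concat (replicate k (inv_word c)))"
    using assms(1) unfolding in_cyclic_def using fr_eq_refl by blast
  then show ?thesis
  proof
    assume h: "fr_eq z (concat (replicate k c))"
    show ?thesis
    proof (intro exI conjI)
      show "concat (replicate k d) \<in> words_over S" using words_over_pow assms(2) by blast
      show "in_cyclic d (concat (replicate k d))" unfolding in_cyclic_def using fr_eq_refl by blast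
      have "amal_eq c d (emb_l z) (emb_l (concat (replicate k c)))"
        using fr_eq_amal[OF emb_l_fr_eq[OF h]] .
      also have "amal_eq c d \<dots> (emb_r (concat (replicate k d)))"
        unfolding emb_l_pow emb_r_pow by (rule amal_pow[OF amal_cd])
      finally show "amal_eq c d (emb_l z) (emb_r (concat (replicate k d)))" .
    qed
  next
    assume h: "fr_eq z (concat (replicate k (inv_word c)))"
    show ?thesis
    proof (intro exI conjI)
      show "concat (replicate k (inv_word d)) \<in> words_over S" using words_over_pow words_over_inv assms(2) by blast
      show "in_cyclic d (concat (replicate k (inv_word d)))" unfolding in_cyclic_def using fr_eq_refl by blast
      have "amal_eq c d (emb_l z) (emb_l (concat (replicate k (inv_word c))))"
        using fr_eq_amal[OF emb_l_fr_eq[OF h]] .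
      also have "amal_eq c d \<dots> (emb_r (concat (replicate k (inv_word d))))"
        unfolding emb_l_pow emb_r_pow by (rule amal_pow[OF amal_cd_inv])
      finally show "amal_eq c d (emb_l z) (emb_r (concat (replicate k (inv_word d))))" .
    qed
  qed
qed

lemma transfer_rl:
  assumes "in_cyclic d z" "c \<in> words_over S"
  shows "\<exists>z'. z' \<in> words_over S \<and> in_cyclic c z' \<and> amal_eq c d (emb_r z) (emb_l z')"
proof -
  obtain k where "fr_eq z (concat (replicate k d)) \<or> fr_eq z (concat (replicate k (inv_word d)))"
    using assms(1) unfolding in_cyclic_def using fr_eq_refl by blast
  then show ?thesis
  proof
    assume h: "fr_eq z (concat (replicate k d))"
    show ?thesis
    proof (intro exI conjI)
      show "concat (replicate k c) \<in> words_over S" using words_over_pow assms(2) by blast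
      show "in_cyclic c (concat (replicate k c))" unfolding in_cyclic_def using fr_eq_refl by blast
      have "amal_eq c d (emb_r z) (emb_r (concat (replicate k d)))"
        using fr_eq_amal[OF emb_r_fr_eq[OF h]] .
      also have "amal_eq c d \<dots> (emb_l (concat (replicate k c)))"
        unfolding emb_l_pow emb_r_pow by (rule amal_eq_sym[OF amal_pow[OF amal_cd]])
      finally show "amal_eq c d (emb_r z) (emb_l (concat (replicate k c)))" .
    qed
  next
    assume h: "fr_eq z (concat (replicate k (inv_word d)))"
    show ?thesis
    proof (intro exI conjI)
      show "concat (replicate k (inv_word c)) \<in> words_over S" using words_over_pow words_over_inv assms(2) by blast
      show "in_cyclic c (concat (replicate k (inv_word c)))" unfolding in_cyclic_def using fr_eq_refl by blast
      have "amal_eq c d (emb_r z) (emb_r (concat (replicate k (inv_word d))))"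
        using fr_eq_amal[OF emb_r_fr_eq[OF h]] .
      also have "amal_eq c d \<dots> (emb_l (concat (replicate k (inv_word c))))"
        unfolding emb_l_pow emb_r_pow by (rule amal_eq_sym[OF amal_pow[OF amal_cd_inv]])
      finally show "amal_eq c d (emb_r z) (emb_l (concat (replicate k (inv_word c))))" .
    qed
  qed
qed

definition syl :: "bool \<times> nat letter list \<Rightarrow> (nat + nat) letter list" where
  "syl s = (if fst s then emb_l (snd s) else emb_r (snd s))"

definition flat :: "(bool \<times> nat letter list) list \<Rightarrow> (nat + nat) letter list" where
  "flat L = concat (map syl L)"

fun alt :: "(bool \<times> nat letter list) list \<Rightarrow> bool" where
  "alt [] = True"
| "alt [x] = True"
| "alt (x # y # r) = (fst x \<noteq> fst y \<and> alt (y # r))"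

lemma alt_Cons: "alt (x # L) \<longleftrightarrow> (L = [] \<or> fst x \<noteq> fst (hd L)) \<and> alt L"
  by (cases L) auto

lemma flat_simps[simp]: "flat [] = []" "flat (s # L) = syl s @ flat L"
  by (auto simp: flat_def)

definition goodsyl :: "nat \<Rightarrow> nat \<Rightarrow> nat letter list \<Rightarrow> nat letter list \<Rightarrow> bool \<times> nat letter list \<Rightarrow> bool" where
  "goodsyl n m c d s = (if fst s then snd s \<in> words_over {..n} \<and> \<not> in_cyclic c (snd s)
                        else snd s \<in> words_over {..m} \<and> \<not> in_cyclic d (snd s))"

definition NFof where
  "NFof n m c d W \<longleftrightarrow> (\<exists>z L. z \<in> words_over {..n} \<and> in_cyclic c z \<and> alt L \<and>
      (\<forall>s\<in>set L. goodsyl n m c d s) \<and> amal_eq c d W (emb_l z @ flat L))"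

lemma in_cyclic_Nil: "in_cyclic c []"
  unfolding in_cyclic_def by (rule exI[of _ 0]) simp

lemma words_over_Cons[simp]: "(l # w \<in> words_over S) \<longleftrightarrow> fst l \<in> S \<and> w \<in> words_over S"
  by (auto simp: words_over_def)
lemma words_over_app[simp]: "(u @ w \<in> words_over S) \<longleftrightarrow> u \<in> words_over S \<and> w \<in> words_over S"
  by (auto simp: words_over_def)
lemma words_over_Nil[simp]: "[] \<in> words_over S"
  by (auto simp: words_over_def)

lemma NF_trans: "NFof n m c d W' \<Longrightarrow> amal_eq c d W W' \<Longrightarrow> NFof n m c d W"
  unfolding NFof_def by (meson amal_eq_trans)

lemma absorb_l:
  assumes "g \<in> words_over {..n}" "alt L" "\<forall>s\<in>set L. goodsyl n m c d s"
  shows "NFof n m c d (emb_l g @ flat L)"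
proof -
  have base: "NFof n m c d (emb_l g @ flat L)"
    if "g \<in> words_over {..n}" "alt L" "\<forall>s\<in>set L. goodsyl n m c d s" "L = [] \<or> \<not> fst (hd L)" for g L
  proof (cases "in_cyclic c g")
    case True
    then show ?thesis unfolding NFof_def using that amal_eq_refl by blast
  next
    case False
    have "alt ((True, g) # L)" using that by (auto simp: alt_Cons)
    moreover have "\<forall>s\<in>set ((True, g) # L). goodsyl n m c d s"
      using that False by (auto simp: goodsyl_def)
    moreover have "emb_l [] @ flat ((True, g) # L) = emb_l g @ flat L" by (simp add: syl_def)
    ultimately show ?thesis unfolding NFof_def using in_cyclic_Nil
      by (metis amal_eq_refl words_over_Nil)
  qed
  show ?thesis
  proof (cases "L = [] \<or> \<not> fst (hd L)")
    case True
    then show ?thesis using base assms by blast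
  next
    case False
    then obtain w L' where L: "L = (True, w) # L'" by (cases L) auto
    then have "w \<in> words_over {..n}" "alt L'" "\<forall>s\<in>set L'. goodsyl n m c d s" "L' = [] \<or> \<not> fst (hd L')"
      using assms by (auto simp: goodsyl_def alt_Cons)
    then have "NFof n m c d (emb_l (g @ w) @ flat L')" using assms(1) by (intro base) auto
    then show ?thesis using L by (simp add: syl_def)
  qed
qed

lemma absorb_r:
  assumes "h \<in> words_over {..m}" "alt L" "\<forall>s\<in>set L. goodsyl n m c d s" "c \<in> words_over {..n}"
  shows "NFof n m c d (emb_r h @ flat L)"
proof -
  have base: "NFof n m c d (emb_r h @ flat L)"
    if "h \<in> words_over {..m}" "alt L" "\<forall>s\<in>set L. goodsyl n m c d s" "L = [] \<or> fst (hd L)" for h L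
  proof (cases "in_cyclic d h")
    case True
    then obtain z where z: "z \<in> words_over {..n}" "in_cyclic c z" "amal_eq c d (emb_r h) (emb_l z)"
      using transfer_rl assms(4) by blast
    have "amal_eq c d (emb_r h @ flat L) (emb_l z @ flat L)"
      using amal_eq_ctx[OF z(3), of "[]" "flat L"] by simp
    then show ?thesis unfolding NFof_def using that z by blast
  next
    case False
    have "alt ((False, h) # L)" using that by (auto simp: alt_Cons)
    moreover have "\<forall>s\<in>set ((False, h) # L). goodsyl n m c d s"
      using that False by (auto simp: goodsyl_def)
    moreover have "emb_l [] @ flat ((False, h) # L) = emb_r h @ flat L" by (simp add: syl_def)
    ultimately show ?thesis unfolding NFof_def using in_cyclic_Nil
      by (metis amal_eq_refl words_over_Nil)
  qed
  show ?thesis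
  proof (cases "L = [] \<or> fst (hd L)")
    case True
    then show ?thesis using base assms by blast
  next
    case False
    then obtain w L' where L: "L = (False, w) # L'" by (cases L) auto
    then have "w \<in> words_over {..m}" "alt L'" "\<forall>s\<in>set L'. goodsyl n m c d s" "L' = [] \<or> fst (hd L')"
      using assms by (auto simp: goodsyl_def alt_Cons)
    then have "NFof n m c d (emb_r (h @ w) @ flat L')" using assms(1) by (intro base) auto
    then show ?thesis using L by (simp add: syl_def)
  qed
qed

lemma normal_form:
  assumes "c \<in> words_over {..n}" "d \<in> words_over {..m}"
  shows "W \<in> words_over (Inl ` {..n} \<union> Inr ` {..m}) \<Longrightarrow> NFof n m c d W"
proof (induction W)
  case Nil
  show ?case unfolding NFof_def using in_cyclic_Nil
    by (rule_tac x="[]" in exI, rule_tac x="[]" in exI) auto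
next
  case (Cons l W)
  then obtain z L where zL: "z \<in> words_over {..n}" "in_cyclic c z" "alt L"
      "\<forall>s\<in>set L. goodsyl n m c d s" "amal_eq c d W (emb_l z @ flat L)"
    unfolding NFof_def by auto
  obtain g b where l: "l = (g, b)" by (cases l)
  have W1: "amal_eq c d (l # W) ([l] @ emb_l z @ flat L)"
    using amal_eq_ctx[OF zL(5), of "[l]" "[]"] by simp
  show ?case
  proof (cases g)
    case (Inl a)
    then have "a \<le> n" using Cons.prems l by auto
    have "[l] @ emb_l z @ flat L = emb_l ((a, b) # z) @ flat L" using l Inl by simp
    moreover have "NFof n m c d (emb_l ((a, b) # z) @ flat L)"
      by (rule absorb_l) (use zL \<open>a \<le> n\<close> in auto)
    ultimately show ?thesis using W1 NF_trans by metis
  next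
    case (Inr a)
    then have "a \<le> m" using Cons.prems l by auto
    obtain z' where z': "z' \<in> words_over {..m}" "amal_eq c d (emb_l z) (emb_r z')"
      using transfer_lr[OF zL(2) assms(2)] by blast
    have "amal_eq c d ([l] @ emb_l z @ flat L) ([l] @ emb_r z' @ flat L)"
      using amal_eq_ctx[OF z'(2), of "[l]" "flat L"] .
    moreover have "[l] @ emb_r z' @ flat L = emb_r ((a, b) # z') @ flat L" using l Inr by simp
    moreover have "NFof n m c d (emb_r ((a, b) # z') @ flat L)"
      by (rule absorb_r) (use zL z' \<open>a \<le> m\<close> assms in auto)
    ultimately show ?thesis using W1 NF_trans amal_eq_trans by metis
  qed
qed

definition stepok :: "(nat letter list \<Rightarrow> int \<Rightarrow> int) \<Rightarrow> (nat letter list \<Rightarrow> int \<Rightarrow> int) \<Rightarrow>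
   (int \<times> int) list \<Rightarrow> bool \<times> nat letter list \<Rightarrow> int \<Rightarrow> int \<Rightarrow> bool" where
  "stepok E1 E2 A s a b = (if fst s then E1 (snd s) a = b
      else (\<exists>y. (a, y) \<in> set A \<and> (b, E2 (snd s) y) \<in> set A))"

fun pathok :: "(nat letter list \<Rightarrow> int \<Rightarrow> int) \<Rightarrow> (nat letter list \<Rightarrow> int \<Rightarrow> int) \<Rightarrow>
   (int \<times> int) list \<Rightarrow> (bool \<times> nat letter list) list \<Rightarrow> int list \<Rightarrow> bool" where
  "pathok E1 E2 A [] ws = (\<exists>w. ws = [w])"
| "pathok E1 E2 A (s # L) ws = (\<exists>w ws'. ws = w # ws' \<and> ws' \<noteq> [] \<and>
      stepok E1 E2 A s (hd ws') w \<and> pathok E1 E2 A L ws')"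

lemma stepok_mono: "stepok E1 E2 A s a b \<Longrightarrow> set A \<subseteq> set A' \<Longrightarrow> stepok E1 E2 A' s a b"
  unfolding stepok_def by (auto split: if_splits)

lemma pathok_mono: "pathok E1 E2 A L ws \<Longrightarrow> set A \<subseteq> set A' \<Longrightarrow> pathok E1 E2 A' L ws"
proof (induction L arbitrary: ws)
  case (Cons s L)
  then obtain w ws' where "ws = w # ws'" "ws' \<noteq> []" "stepok E1 E2 A s (hd ws') w" "pathok E1 E2 A L ws'"
    by auto
  then show ?case using Cons.IH Cons.prems(2) stepok_mono by (metis pathok.simps(2))
qed simp

lemma pick: "infinite A \<Longrightarrow> finite B \<Longrightarrow> \<exists>x. x \<in> A \<and> x \<notin> B"
  using Diff_infinite_finite infinite_imp_nonempty by blast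

definition GoodL where "GoodL P E1 w = {x. P x = x \<and> P (E1 w x) = E1 w x \<and> E1 w x \<noteq> x}"

lemma path_exists:
  fixes P Q :: "int \<Rightarrow> int"
  assumes inj1: "\<forall>w. inj (E1 w)" and inj2: "\<forall>w. inj (E2 w)" and infP: "infinite {x. P x = x}"
  shows "alt L \<Longrightarrow> (\<forall>s\<in>set L. if fst s then infinite (GoodL P E1 (snd s)) else infinite (GoodL Q E2 (snd s)))
    \<Longrightarrow> finite S1 \<Longrightarrow> finite S2 \<Longrightarrow> (\<forall>T. finite T \<longrightarrow> infinite (G T) \<and> G T \<subseteq> {x. P x = x})
    \<Longrightarrow> \<exists>ws A. pathok E1 E2 A L ws \<and> distinct ws \<and> set ws \<inter> S1 = {} \<and> set ws \<subseteq> {x. P x = x} \<and>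
        fst ` set A \<subseteq> set ws \<and> snd ` set A \<subseteq> {y. Q y = y} - S2 \<and>
        distinct (map fst A) \<and> distinct (map snd A) \<and>
        ((L = [] \<or> \<not> fst (hd L)) \<longrightarrow> hd ws \<in> G (set (tl ws))) \<and>
        ((L = [] \<or> fst (hd L)) \<longrightarrow> hd ws \<notin> fst ` set A)"
proof (induction L arbitrary: G)
  case Nil
  have "infinite (G {})" "G {} \<subseteq> {x. P x = x}" using Nil.prems(5) by auto
  then obtain w where w: "w \<in> G {}" "w \<notin> S1" using pick[OF _ Nil.prems(3)] by blast
  have "P w = w" using w(1) \<open>G {} \<subseteq> _\<close> by blast
  show ?case
    by (rule exI[of _ "[w]"], rule exI[of _ "[]"]) (use w \<open>P w = w\<close> in simp)
next
  case (Cons s L)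
  obtain b g where s: "s = (b, g)" by (cases s)
  have altL: "alt L" and hdL: "L = [] \<or> fst (hd L) \<noteq> b" using Cons.prems(1) s by (auto simp: alt_Cons)
  have goodL: "\<forall>s\<in>set L. if fst s then infinite (GoodL P E1 (snd s)) else infinite (GoodL Q E2 (snd s))"
    using Cons.prems(2) by (meson list.set_intros(2))
  show ?case
  proof (cases b)
    case True
    let ?E = "E1 g"
    define G' where "G' = (\<lambda>T. GoodL P E1 g - (T \<union> S1) - ?E -` (T \<union> S1))"
    have infg: "infinite (GoodL P E1 g)" using Cons.prems(2) s True by auto
    have G': "\<forall>T. finite T \<longrightarrow> infinite (G' T) \<and> G' T \<subseteq> {x. P x = x}"
    proof (intro allI impI conjI)
      fix T :: "int set" assume "finite T"
      then have "finite (T \<union> S1 \<union> ?E -` (T \<union> S1))"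
        using Cons.prems(3) finite_vimageI inj1 by blast
      then have "infinite (GoodL P E1 g - ((T \<union> S1) \<union> ?E -` (T \<union> S1)))"
        using Diff_infinite_finite infg by blast
      moreover have "G' T = GoodL P E1 g - ((T \<union> S1) \<union> ?E -` (T \<union> S1))" unfolding G'_def by blast
      ultimately show "infinite (G' T)" by simp
      show "G' T \<subseteq> {x. P x = x}" unfolding G'_def GoodL_def by auto
    qed
    obtain ws A where IH: "pathok E1 E2 A L ws" "distinct ws" "set ws \<inter> S1 = {}" "set ws \<subseteq> {x. P x = x}"
        "fst ` set A \<subseteq> set ws" "snd ` set A \<subseteq> {y. Q y = y} - S2"
        "distinct (map fst A)" "distinct (map snd A)"
        "(L = [] \<or> \<not> fst (hd L)) \<longrightarrow> hd ws \<in> G' (set (tl ws))"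
      using Cons.IH[OF altL goodL Cons.prems(3,4) G'] by blast
    have hw: "hd ws \<in> G' (set (tl ws))" using IH(9) hdL True by auto
    have ne: "ws \<noteq> []" using IH(1) by (cases L) auto
    let ?u = "hd ws" let ?v = "?E (hd ws)"
    have ws: "ws = ?u # tl ws" using ne by simp
    have v: "?v \<noteq> ?u" "?v \<notin> set (tl ws)" "?v \<notin> S1" "P ?v = ?v"
      using hw unfolding G'_def GoodL_def by auto
    have vnot: "?v \<notin> set ws" using v ws by (metis set_ConsD)
    show ?thesis
    proof (intro exI[of _ "?v # ws"] exI[of _ A] conjI)
      show "pathok E1 E2 A (s # L) (?v # ws)" using IH(1) ne s True by (auto simp: stepok_def)
      show "distinct (?v # ws)" using IH(2) vnot by simp
      show "set (?v # ws) \<inter> S1 = {}" using IH(3) v by auto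
      show "set (?v # ws) \<subseteq> {x. P x = x}" using IH(4) v by auto
      show "fst ` set A \<subseteq> set (?v # ws)" using IH(5) by auto
      show "(s # L = [] \<or> fst (hd (s # L))) \<longrightarrow> hd (?v # ws) \<notin> fst ` set A"
        using IH(5) vnot by auto
    qed (use IH s True in auto)
  next
    case False
    let ?E = "E2 g"
    define G' where "G' = (\<lambda>T. {x. P x = x} - T - S1)"
    have G': "\<forall>T. finite T \<longrightarrow> infinite (G' T) \<and> G' T \<subseteq> {x. P x = x}"
    proof (intro allI impI conjI)
      fix T :: "int set" assume "finite T"
      then have "infinite ({x. P x = x} - (T \<union> S1))"
        using Diff_infinite_finite[OF _ infP, of "T \<union> S1"] Cons.prems(3) by simp
      moreover have "G' T = {x. P x = x} - (T \<union> S1)" unfolding G'_def by blast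
      ultimately show "infinite (G' T)" by simp
      show "G' T \<subseteq> {x. P x = x}" unfolding G'_def by blast
    qed
    obtain ws A where IH: "pathok E1 E2 A L ws" "distinct ws" "set ws \<inter> S1 = {}" "set ws \<subseteq> {x. P x = x}"
        "fst ` set A \<subseteq> set ws" "snd ` set A \<subseteq> {y. Q y = y} - S2"
        "distinct (map fst A)" "distinct (map snd A)"
        "(L = [] \<or> fst (hd L)) \<longrightarrow> hd ws \<notin> fst ` set A"
      using Cons.IH[OF altL goodL Cons.prems(3,4) G'] by blast
    have ne: "ws \<noteq> []" using IH(1) by (cases L) auto
    let ?w = "hd ws"
    have wA: "?w \<notin> fst ` set A" using IH(9) hdL False by auto
    have infh: "infinite (GoodL Q E2 g)" using Cons.prems(2) s False by auto
    have finS: "finite (S2 \<union> snd ` set A)" using Cons.prems(4) by simp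
    have "finite (S2 \<union> snd ` set A \<union> ?E -` (S2 \<union> snd ` set A))"
      using finS finite_vimageI[OF finS inj2[rule_format, of g]] by blast
    then obtain y where y: "y \<in> GoodL Q E2 g" "y \<notin> S2 \<union> snd ` set A \<union> ?E -` (S2 \<union> snd ` set A)"
      using pick[OF infh \<open>finite (S2 \<union> snd ` set A \<union> ?E -` (S2 \<union> snd ` set A))\<close>] by (elim exE conjE) (rule that)
    have "infinite (G (set ws))" using Cons.prems(5)[rule_format, of "set ws"] by simp
    moreover have "finite (set ws \<union> S1)" using Cons.prems(3) by simp
    ultimately obtain v where v: "v \<in> G (set ws)" "v \<notin> set ws \<union> S1"
      using pick by (metis (no_types, lifting))
    have yQ: "Q y = y" "Q (?E y) = ?E y" "?E y \<noteq> y" using y(1) unfolding GoodL_def by auto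
    have vP: "P v = v" using v(1) Cons.prems(5)[rule_format, of "set ws"] by auto
    have wset: "?w \<in> set ws" using ne by simp
    let ?A = "(?w, y) # (v, ?E y) # A"
    show ?thesis
    proof (intro exI[of _ "v # ws"] exI[of _ ?A] conjI)
      have "pathok E1 E2 ?A L ws" by (rule pathok_mono[OF IH(1)]) auto
      then show "pathok E1 E2 ?A (s # L) (v # ws)" using ne s False by (auto simp: stepok_def)
      show "distinct (v # ws)" using IH(2) v by simp
      show "set (v # ws) \<inter> S1 = {}" using IH(3) v by auto
      show "set (v # ws) \<subseteq> {x. P x = x}" using IH(4) vP by auto
      show "fst ` set ?A \<subseteq> set (v # ws)" using IH(5) wset by auto
      show "snd ` set ?A \<subseteq> {y. Q y = y} - S2" using IH(6) yQ y by auto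
      show "distinct (map fst ?A)" using IH(7,5) wA v wset by auto
      show "distinct (map snd ?A)" using IH(8) y yQ by auto
      show "s # L = [] \<or> \<not> fst (hd (s # L)) \<longrightarrow> hd (v # ws) \<in> G (set (tl (v # ws)))" using v by simp
      show "s # L = [] \<or> fst (hd (s # L)) \<longrightarrow> hd (v # ws) \<notin> fst ` set ?A" using s False by simp
    qed
  qed
qed

definition sw :: "int \<Rightarrow> int \<Rightarrow> int \<Rightarrow> int" where
  "sw u v x = (if x = u then v else if x = v then u else x)"

lemma sw_bij: "bij (sw u v)"
proof (rule o_bij[of "sw u v"])
  show "sw u v \<circ> sw u v = id" by (auto simp: sw_def fun_eq_iff)
  then show "sw u v \<circ> sw u v = id" .
qed

lemma sw_comm: assumes "inj Q" "Q u = u" "Q v = v" shows "sw u v (Q x) = Q (sw u v x)"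
proof -
  consider "x = u" | "x = v" | "x \<noteq> u" "x \<noteq> v" by blast
  then show ?thesis
  proof cases
    case 3
    then have "Q x \<noteq> u" "Q x \<noteq> v" using assms by (metis injD)+
    then show ?thesis using 3 by (simp add: sw_def)
  qed (use assms in \<open>auto simp: sw_def\<close>)
qed

lemma extend:
  fixes \<sigma> P Q :: "int \<Rightarrow> int"
  assumes "bij \<sigma>" "\<forall>x. \<sigma> (P x) = Q (\<sigma> x)" "inj Q"
  shows "distinct (map fst A) \<Longrightarrow> distinct (map snd A) \<Longrightarrow>
    (\<forall>(a, b)\<in>set A. P a = a \<and> Q b = b \<and> a \<notin> F \<and> b \<notin> \<sigma> ` F) \<Longrightarrow>
    \<exists>\<sigma>'. bij \<sigma>' \<and> (\<forall>x. \<sigma>' (P x) = Q (\<sigma>' x)) \<and> (\<forall>x\<in>F. \<sigma>' x = \<sigma> x) \<and> (\<forall>(a, b)\<in>set A. \<sigma>' a = b)"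
proof (induction A)
  case Nil
  show ?case by (rule exI[of _ \<sigma>]) (use assms in auto)
next
  case (Cons p A)
  obtain a b where p: "p = (a, b)" by (cases p)
  have pr: "distinct (map fst A)" "distinct (map snd A)" "\<forall>(a, b)\<in>set A. P a = a \<and> Q b = b \<and> a \<notin> F \<and> b \<notin> \<sigma> ` F"
    using Cons.prems by simp_all
  obtain \<sigma>1 where s1: "bij \<sigma>1" "\<forall>x. \<sigma>1 (P x) = Q (\<sigma>1 x)" "\<forall>x\<in>F. \<sigma>1 x = \<sigma> x" "\<forall>(a, b)\<in>set A. \<sigma>1 a = b"
    using Cons.IH[OF pr] by blast
  have ab: "P a = a" "Q b = b" "a \<notin> F" "b \<notin> \<sigma> ` F" "a \<notin> fst ` set A" "b \<notin> snd ` set A"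
    using Cons.prems(3) Cons.prems(1,2) p by simp_all
  have Qs1a: "Q (\<sigma>1 a) = \<sigma>1 a" using s1(2)[rule_format, of a] ab(1) by simp
  define \<sigma>2 where "\<sigma>2 = sw (\<sigma>1 a) b \<circ> \<sigma>1"
  have inj1: "inj \<sigma>1" using s1(1) bij_is_inj by blast
  show ?case
  proof (intro exI[of _ \<sigma>2] conjI)
    show "bij \<sigma>2" unfolding \<sigma>2_def using sw_bij s1(1) bij_comp by blast
    show "\<forall>x. \<sigma>2 (P x) = Q (\<sigma>2 x)"
      unfolding \<sigma>2_def using s1(2) sw_comm[OF assms(3) Qs1a ab(2)] by simp
    show "\<forall>x\<in>F. \<sigma>2 x = \<sigma> x"
    proof
      fix x assume "x \<in> F"
      then have "\<sigma>1 x \<noteq> \<sigma>1 a" "\<sigma>1 x \<noteq> b" using ab(3,4) s1(3) inj1 by (auto simp: inj_eq)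
      then show "\<sigma>2 x = \<sigma> x" using s1(3) \<open>x \<in> F\<close> by (simp add: \<sigma>2_def sw_def)
    qed
    show "\<forall>(a', b')\<in>set (p # A). \<sigma>2 a' = b'"
    proof
      fix q assume "q \<in> set (p # A)"
      obtain a' b' where q: "q = (a', b')" by (cases q)
      show "case q of (a', b') \<Rightarrow> \<sigma>2 a' = b'"
      proof (cases "q = p")
        case True then show ?thesis using p by (simp add: \<sigma>2_def sw_def q)
      next
        case False
        then have qA: "(a', b') \<in> set A" using \<open>q \<in> set (p # A)\<close> q by auto
        then have "\<sigma>1 a' = b'" "a' \<noteq> a" "b' \<noteq> b" using s1(4) ab(5,6) by (auto simp: image_iff)
        then have "\<sigma>1 a' \<noteq> \<sigma>1 a" using inj1 by (auto simp: inj_eq)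
        then show ?thesis using \<open>\<sigma>1 a' = b'\<close> \<open>b' \<noteq> b\<close> q by (simp add: \<sigma>2_def sw_def)
      qed
    qed
  qed
qed

lemma realize:
  fixes \<rho>g :: "nat + nat \<Rightarrow> int \<Rightarrow> int" and \<tau> :: "int \<Rightarrow> int"
  assumes ev: "\<forall>s x. eval_word \<rho>g (syl s) x = (if fst s then E1 (snd s) x else inv \<tau> (E2 (snd s) (\<tau> x)))"
    and inj: "inj \<tau>" and A: "\<forall>(a, b)\<in>set A. \<tau> a = b"
  shows "pathok E1 E2 A L ws \<Longrightarrow> eval_word \<rho>g (flat L) (last ws) = hd ws"
proof (induction L arbitrary: ws)
  case Nil
  then show ?case by auto
next
  case (Cons s L)
  then obtain w ws' where ws: "ws = w # ws'" "ws' \<noteq> []" "stepok E1 E2 A s (hd ws') w" "pathok E1 E2 A L ws'"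
    by auto
  have IH: "eval_word \<rho>g (flat L) (last ws') = hd ws'" using Cons.IH ws(4) .
  have "eval_word \<rho>g (syl s) (hd ws') = w"
  proof (cases "fst s")
    case True then show ?thesis using ev[rule_format, of s] ws(3) by (simp add: stepok_def)
  next
    case False
    then obtain y where "(hd ws', y) \<in> set A" "(w, E2 (snd s) y) \<in> set A" using ws(3) by (auto simp: stepok_def)
    then have "\<tau> (hd ws') = y" "\<tau> w = E2 (snd s) y" using A by auto
    then have "inv \<tau> (E2 (snd s) y) = w" using inv_f_f[OF inj, of w] by simp
    then show ?thesis using ev[rule_format, of s] False \<open>\<tau> (hd ws') = y\<close> by simp
  qed
  then show ?case using IH ws by simp
qed

lemma beta_bij: "bij beta"
proof (rule bijI)
  show "inj beta" by (auto simp: inj_def beta_def)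
  show "surj beta" unfolding beta_def by (metis diff_add_cancel surj_def)
qed

lemma fgen_bij: "\<forall>i<N. bij (\<alpha> i) \<Longrightarrow> bij (fgen N \<alpha> i)"
  by (auto simp: fgen_def beta_bij)

lemma letter_bij: "\<forall>g. bij (\<rho> g) \<Longrightarrow> bij (letter_perm \<rho> l)"
  by (auto simp: letter_perm_def bij_imp_bij_inv)

lemma eval_bij: "\<forall>g. bij (\<rho> g) \<Longrightarrow> bij (eval_word \<rho> w)"
  by (induction w) (auto intro: bij_comp letter_bij)

lemma gamma_bij:
  assumes "\<forall>i. bij (\<rho> i)" "\<forall>j. bij (\<rho>' j)" "bij \<sigma>"
  shows "\<forall>g. bij (gamma_gen \<rho> \<rho>' \<sigma> g)"
  using assms by (auto simp: gamma_gen_def split: sum.splits intro!: bij_comp bij_imp_bij_inv)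

lemma eval_emb_l: "eval_word (gamma_gen \<rho> \<rho>' \<sigma>) (emb_l w) = eval_word \<rho> w"
  by (induction w) (auto simp: letter_perm_def gamma_gen_def)

lemma inv_conj:
  fixes \<sigma> f :: "'a \<Rightarrow> 'a"
  assumes "bij \<sigma>" "bij f"
  shows "inv (inv \<sigma> \<circ> f \<circ> \<sigma>) = inv \<sigma> \<circ> inv f \<circ> \<sigma>"
proof (rule inv_unique_comp)
  have a: "\<sigma> \<circ> inv \<sigma> = id" "inv \<sigma> \<circ> \<sigma> = id" "f \<circ> inv f = id" "inv f \<circ> f = id"
    using assms by (metis bij_is_surj surj_iff, metis bij_is_inj inj_iff, metis bij_is_surj surj_iff, metis bij_is_inj inj_iff)
  have b: "\<sigma> (inv \<sigma> x) = x" "inv \<sigma> (\<sigma> x) = x" "f (inv f x) = x" "inv f (f x) = x" for x :: 'a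
    using a by (metis comp_apply id_apply)+
  show "(inv \<sigma> \<circ> f \<circ> \<sigma>) \<circ> (inv \<sigma> \<circ> inv f \<circ> \<sigma>) = id"
    by (simp add: fun_eq_iff b)
  show "(inv \<sigma> \<circ> inv f \<circ> \<sigma>) \<circ> (inv \<sigma> \<circ> f \<circ> \<sigma>) = id"
    by (simp add: fun_eq_iff b)
qed

lemma letter_gamma_r:
  assumes "bij \<sigma>" "\<forall>j. bij (\<rho>' j)"
  shows "letter_perm (gamma_gen \<rho> \<rho>' \<sigma>) (Inr j, s) y = inv \<sigma> ((if s then \<rho>' j else inv (\<rho>' j)) (\<sigma> y))"
  using assms inv_conj[OF assms(1), of "\<rho>' j"] by (auto simp: letter_perm_def gamma_gen_def)

lemma eval_emb_r:
  assumes "bij \<sigma>" "\<forall>j. bij (\<rho>' j)"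
  shows "eval_word (gamma_gen \<rho> \<rho>' \<sigma>) (emb_r w) x = inv \<sigma> (eval_word \<rho>' w (\<sigma> x))"
proof (induction w arbitrary: x)
  case (Cons l w)
  obtain j s where l: "l = (j, s)" by (cases l)
  have sf: "\<sigma> (inv \<sigma> z) = z" for z using assms(1) by (simp add: bij_is_surj surj_f_inv_f)
  show ?case using Cons sf by (simp add: l letter_gamma_r[OF assms] letter_perm_def[of "\<rho>'"])
qed (simp add: assms(1) bij_is_inj)

lemma eval_amal:
  assumes "bij \<sigma>" "\<forall>i. bij (\<rho> i)" "\<forall>j. bij (\<rho>' j)"
    and Z: "\<forall>x. \<sigma> (eval_word \<rho> c x) = eval_word \<rho>' d (\<sigma> x)"
    and "amal_eq c d u v"
  shows "eval_word (gamma_gen \<rho> \<rho>' \<sigma>) u = eval_word (gamma_gen \<rho> \<rho>' \<sigma>) v"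
proof -
  have gb: "\<forall>g. bij (gamma_gen \<rho> \<rho>' \<sigma> g)" using gamma_bij assms by blast
  have cd: "eval_word (gamma_gen \<rho> \<rho>' \<sigma>) (emb_l c) = eval_word (gamma_gen \<rho> \<rho>' \<sigma>) (emb_r d)"
  proof
    fix x
    have "inv \<sigma> (\<sigma> (eval_word \<rho> c x)) = eval_word \<rho> c x"
      using assms(1) by (simp add: bij_is_inj inv_f_f)
    then show "eval_word (gamma_gen \<rho> \<rho>' \<sigma>) (emb_l c) x = eval_word (gamma_gen \<rho> \<rho>' \<sigma>) (emb_r d) x"
      using Z by (simp add: eval_emb_l eval_emb_r[OF assms(1,3)])
  qed
  have step: "eval_word (gamma_gen \<rho> \<rho>' \<sigma>) a = eval_word (gamma_gen \<rho> \<rho>' \<sigma>) b" if "amal_step c d a b" for a b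
    using that unfolding amal_step_def
  proof
    assume "fr_step a b" then show ?thesis using fr_step_eval[OF gb] by blast
  next
    assume "\<exists>p s. a = p @ emb_l c @ s \<and> b = p @ emb_r d @ s"
    then show ?thesis using cd by auto
  qed
  show ?thesis using assms(5) unfolding amal_eq_def
    by (induction rule: rtranclp_induct) (auto dest: step)
qed

lemma locality:
  assumes "bij \<sigma>" "\<forall>j. bij (\<rho>' j)"
  shows "\<exists>F. finite F \<and> (\<forall>\<sigma>'. bij \<sigma>' \<longrightarrow> (\<forall>y\<in>F. \<sigma>' y = \<sigma> y) \<longrightarrow>
      eval_word (gamma_gen \<rho> \<rho>' \<sigma>') W x = eval_word (gamma_gen \<rho> \<rho>' \<sigma>) W x)"
proof (induction W)
  case Nil
  then show ?case by auto
next
  case (Cons l W)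
  then obtain F0 where F0: "finite F0" "\<forall>\<sigma>'. bij \<sigma>' \<longrightarrow> (\<forall>y\<in>F0. \<sigma>' y = \<sigma> y) \<longrightarrow>
      eval_word (gamma_gen \<rho> \<rho>' \<sigma>') W x = eval_word (gamma_gen \<rho> \<rho>' \<sigma>) W x" by blast
  obtain g s where l: "l = (g, s)" by (cases l)
  let ?y = "eval_word (gamma_gen \<rho> \<rho>' \<sigma>) W x"
  show ?case
  proof (cases g)
    case (Inl i)
    show ?thesis
    proof (intro exI conjI allI impI)
      show "finite F0" by fact
      fix \<sigma>' :: "int \<Rightarrow> int" assume "bij \<sigma>'" "\<forall>y\<in>F0. \<sigma>' y = \<sigma> y"
      then show "eval_word (gamma_gen \<rho> \<rho>' \<sigma>') (l # W) x = eval_word (gamma_gen \<rho> \<rho>' \<sigma>) (l # W) x"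
        using F0 by (simp add: l Inl letter_perm_def gamma_gen_def)
    qed
  next
    case (Inr j)
    let ?f = "if s then \<rho>' j else inv (\<rho>' j)"
    let ?z = "?f (\<sigma> ?y)"
    show ?thesis
    proof (intro exI conjI allI impI)
      show "finite (insert ?y (insert (inv \<sigma> ?z) F0))" using F0 by simp
      fix \<sigma>' :: "int \<Rightarrow> int" assume b: "bij \<sigma>'" and ag: "\<forall>y\<in>insert ?y (insert (inv \<sigma> ?z) F0). \<sigma>' y = \<sigma> y"
      then have e: "eval_word (gamma_gen \<rho> \<rho>' \<sigma>') W x = ?y" using F0 by simp
      have "\<sigma>' (inv \<sigma> ?z) = ?z" using ag assms(1) by (simp add: bij_is_surj surj_f_inv_f)
      then have "inv \<sigma>' ?z = inv \<sigma> ?z" using b by (simp add: bij_is_inj inv_f_eq)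
      then show "eval_word (gamma_gen \<rho> \<rho>' \<sigma>') (l # W) x = eval_word (gamma_gen \<rho> \<rho>' \<sigma>) (l # W) x"
        using e ag by (simp add: l Inr letter_gamma_r[OF b assms(2)] letter_gamma_r[OF assms])
    qed
  qed
qed

lemma pow_fix: "eval_word \<rho> w x = x \<Longrightarrow> eval_word \<rho> (concat (replicate k w)) x = x"
  by (induction k) auto

lemma cyc_fix:
  assumes "\<forall>g. bij (\<rho> g)" "in_cyclic c z" "eval_word \<rho> c x = x"
  shows "eval_word \<rho> z x = x"
proof -
  have "eval_word \<rho> (inv_word c @ c) = eval_word \<rho> []" by (rule fr_eq_eval[OF assms(1) fr_eq_inv_w])
  then have ic: "eval_word \<rho> (inv_word c) x = x" using assms(3) by (metis comp_apply eval_Nil eval_append id_apply)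
  obtain k where "fr_eq z (concat (replicate k c)) \<or> fr_eq z (concat (replicate k (inv_word c)))"
    using assms(2) unfolding in_cyclic_def by blast
  then show ?thesis using fr_eq_eval[OF assms(1)] pow_fix assms(3) ic by metis
qed

lemma hd_last: "distinct ws \<Longrightarrow> ws = w # ws' \<Longrightarrow> ws' \<noteq> [] \<Longrightarrow> hd ws \<noteq> last ws"
  by auto

theorem proposition12:
  fixes n m :: nat and \<alpha> \<alpha>' :: "nat \<Rightarrow> int \<Rightarrow> int" and c d :: "nat letter list"
    and Z :: "(int \<Rightarrow> int) set"
  assumes "n \<ge> 1" and "m \<ge> 1"
    and "c \<in> words_over {..n}" and "c \<noteq> []" and "cyc_reduced c" and "exp_sum n c = 0"
    and "d \<in> words_over {..m}" and "d \<noteq> []" and "cyc_reduced d" and "exp_sum m d = 0"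
    and "\<forall>i<n. bij (\<alpha> i)" and "\<forall>j<m. bij (\<alpha>' j)"
    and "good_action n (fgen n \<alpha>) c"
    and "good_action m (fgen m \<alpha>') d"
    and "Z = {\<sigma>. bij \<sigma> \<and> \<sigma> \<circ> eval_word (fgen n \<alpha>) c = eval_word (fgen m \<alpha>') d \<circ> \<sigma>}"
  shows "generic_in (subtopology symtop Z)
           {\<sigma>\<in>Z. gamma_faithful n m (fgen n \<alpha>) (fgen m \<alpha>') c d \<sigma>}"
proof -
  define \<rho> where "\<rho> = fgen n \<alpha>"
  define \<rho>' where "\<rho>' = fgen m \<alpha>'"
  define P where "P = eval_word \<rho> c"
  define Q where "Q = eval_word \<rho>' d"
  have rb: "\<forall>i. bij (\<rho> i)" using assms(11) fgen_bij unfolding \<rho>_def by blast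
  have rb': "\<forall>i. bij (\<rho>' i)" using assms(12) fgen_bij unfolding \<rho>'_def by blast
  have Zdef: "Z = {\<sigma>. bij \<sigma> \<and> (\<forall>x. \<sigma> (P x) = Q (\<sigma> x))}"
    using assms(15) unfolding P_def Q_def \<rho>_def \<rho>'_def by (auto simp: fun_eq_iff)
  have Zbij: "Z \<subseteq> {\<sigma>. bij \<sigma>}" using Zdef by auto
  have injQ: "inj Q" unfolding Q_def using eval_bij[OF rb'] bij_is_inj by blast
  have inj1: "\<forall>w. inj (eval_word \<rho> w)" using eval_bij[OF rb] bij_is_inj by blast
  have inj2: "\<forall>w. inj (eval_word \<rho>' w)" using eval_bij[OF rb'] bij_is_inj by blast
  have faith: "\<forall>w\<in>words_over {..n}. eval_word \<rho> w = id \<longrightarrow> fr_eq w []"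
    using assms(13) unfolding good_action_def Let_def \<rho>_def by blast
  have goodc: "\<forall>w\<in>words_over {..n}. \<not> in_cyclic c w \<longrightarrow> infinite (GoodL P (eval_word \<rho>) w)"
    using assms(13) unfolding good_action_def Let_def GoodL_def P_def \<rho>_def by blast
  have goodd: "\<forall>w\<in>words_over {..m}. \<not> in_cyclic d w \<longrightarrow> infinite (GoodL Q (eval_word \<rho>') w)"
    using assms(14) unfolding good_action_def Let_def GoodL_def Q_def \<rho>'_def by blast
  let ?T = "subtopology symtop Z"
  have top: "topspace ?T = Z" by (rule topspace_symZ[OF Zbij])
  let ?EV = "\<lambda>\<sigma> W. eval_word (gamma_gen \<rho> \<rho>' \<sigma>) W"
  let ?Gens = "Inl ` {..n} \<union> Inr ` {..m}"
  have evamal: "?EV \<sigma> u = ?EV \<sigma> v" if "\<sigma> \<in> Z" "amal_eq c d u v" for \<sigma> u v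
  proof -
    have "bij \<sigma>" "\<forall>x. \<sigma> (eval_word \<rho> c x) = eval_word \<rho>' d (\<sigma> x)"
      using that Zdef unfolding P_def Q_def by auto
    then show ?thesis using eval_amal rb rb' that(2) by blast
  qed
  have closed: "closedin ?T {\<sigma>\<in>Z. ?EV \<sigma> W = id}" for W
  proof -
    have "openin ?T (Z - {\<sigma>\<in>Z. ?EV \<sigma> W = id})"
    proof (rule nbhd_openin)
      show "Z - {\<sigma>\<in>Z. ?EV \<sigma> W = id} \<subseteq> Z" by blast
      show "Z \<subseteq> {\<sigma>. bij \<sigma>}" by fact
      show "\<forall>\<sigma>\<in>Z - {\<sigma>\<in>Z. ?EV \<sigma> W = id}. \<exists>F. finite F \<and>
          (\<forall>\<sigma>'\<in>Z. (\<forall>x\<in>F. \<sigma>' x = \<sigma> x) \<longrightarrow> \<sigma>' \<in> Z - {\<sigma>\<in>Z. ?EV \<sigma> W = id})"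
      proof
        fix \<sigma> assume \<sigma>: "\<sigma> \<in> Z - {\<sigma>\<in>Z. ?EV \<sigma> W = id}"
        then obtain x where x: "?EV \<sigma> W x \<noteq> x" by (auto simp: fun_eq_iff)
        have "bij \<sigma>" using \<sigma> Zbij by auto
        obtain F where F: "finite F" "\<forall>\<sigma>'. bij \<sigma>' \<longrightarrow> (\<forall>y\<in>F. \<sigma>' y = \<sigma> y) \<longrightarrow> ?EV \<sigma>' W x = ?EV \<sigma> W x"
          using locality[OF \<open>bij \<sigma>\<close> rb', of \<rho> W x] by blast
        show "\<exists>F. finite F \<and> (\<forall>\<sigma>'\<in>Z. (\<forall>x\<in>F. \<sigma>' x = \<sigma> x) \<longrightarrow> \<sigma>' \<in> Z - {\<sigma>\<in>Z. ?EV \<sigma> W = id})"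
        proof (intro exI[of _ F] conjI ballI impI)
          show "finite F" by fact
          fix \<sigma>' assume "\<sigma>' \<in> Z" "\<forall>x\<in>F. \<sigma>' x = \<sigma> x"
          then have "?EV \<sigma>' W x \<noteq> x" using F(2) x Zbij by auto
          then show "\<sigma>' \<in> Z - {\<sigma>\<in>Z. ?EV \<sigma> W = id}" using \<open>\<sigma>' \<in> Z\<close> by auto
        qed
      qed
    qed
    then show ?thesis unfolding closedin_def top by auto
  qed
  have nowhere: "?T interior_of {\<sigma>\<in>Z. ?EV \<sigma> W = id} = {}"
    if W: "W \<in> words_over ?Gens" "\<not> amal_eq c d W []" for W
  proof -
    obtain z L where zL: "z \<in> words_over {..n}" "in_cyclic c z" "alt L" "\<forall>s\<in>set L. goodsyl n m c d s"
        "amal_eq c d W (emb_l z @ flat L)"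
      using normal_form[OF assms(3) assms(7) W(1)] unfolding NFof_def by blast
    show ?thesis
    proof (cases "L = []")
      case True
      have emp: "{\<sigma>\<in>Z. ?EV \<sigma> W = id} = {}"
      proof (rule ccontr)
        assume "{\<sigma>\<in>Z. ?EV \<sigma> W = id} \<noteq> {}"
        then obtain \<sigma> where \<sigma>: "\<sigma> \<in> Z" "?EV \<sigma> W = id" by blast
        then have "?EV \<sigma> (emb_l z) = id" using evamal[OF \<sigma>(1) zL(5)] True by simp
        then have "eval_word \<rho> z = id" by (simp add: eval_emb_l)
        then have "fr_eq z []" using faith zL(1) by blast
        then have "amal_eq c d (emb_l z) []" using fr_eq_amal emb_l_fr_eq by fastforce
        then have "amal_eq c d W []" using zL(5) True amal_eq_trans by auto
        then show False using W(2) by blast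
      qed
      show ?thesis unfolding emp by (rule interior_of_empty)
    next
      case False
      let ?B = "{\<sigma>\<in>Z. ?EV \<sigma> W = id}"
      show ?thesis
      proof (rule ccontr)
        assume "?T interior_of ?B \<noteq> {}"
        then obtain \<sigma> where \<sigma>I: "\<sigma> \<in> ?T interior_of ?B" by blast
        have "\<sigma> \<in> ?B" using interior_of_subset[of ?T ?B] \<sigma>I by (rule subsetD)
        then have \<sigma>Z: "\<sigma> \<in> Z" by simp
        obtain F where F: "finite F" "\<forall>\<sigma>'\<in>Z. bij \<sigma>' \<longrightarrow> (\<forall>x\<in>F. \<sigma>' x = \<sigma> x) \<longrightarrow> \<sigma>' \<in> ?T interior_of ?B"
          using open_nbhd[OF openin_interior_of \<sigma>I] by (elim exE conjE) (rule that)
        have "\<sigma> \<in> {\<sigma>. bij \<sigma> \<and> (\<forall>x. \<sigma> (P x) = Q (\<sigma> x))}" using \<sigma>Z unfolding Zdef .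
        then have \<sigma>b: "bij \<sigma>" and \<sigma>c: "\<forall>x. \<sigma> (P x) = Q (\<sigma> x)" by simp_all
        have goodL: "\<forall>s\<in>set L. if fst s then infinite (GoodL P (eval_word \<rho>) (snd s))
                                  else infinite (GoodL Q (eval_word \<rho>') (snd s))"
          using zL(4) goodc goodd unfolding goodsyl_def by auto
        have infP: "infinite {x. P x = x}"
        proof -
          obtain s0 L0 where L: "L = s0 # L0" using False by (cases L) auto
          show ?thesis
          proof (cases "fst s0")
            case True
            then have "infinite (GoodL P (eval_word \<rho>) (snd s0))" using goodL L by auto
            moreover have "GoodL P (eval_word \<rho>) (snd s0) \<subseteq> {x. P x = x}" unfolding GoodL_def by auto
            ultimately show ?thesis using finite_subset by blast
          next
            case False
            then have "infinite (GoodL Q (eval_word \<rho>') (snd s0))" using goodL L by auto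
            moreover have "GoodL Q (eval_word \<rho>') (snd s0) \<subseteq> \<sigma> ` {x. P x = x}"
            proof
              fix y assume "y \<in> GoodL Q (eval_word \<rho>') (snd s0)"
              then have "Q y = y" unfolding GoodL_def by auto
              have "\<sigma> (inv \<sigma> y) = y" using \<sigma>b by (simp add: bij_is_surj surj_f_inv_f)
              then have "\<sigma> (P (inv \<sigma> y)) = \<sigma> (inv \<sigma> y)" using \<sigma>c \<open>Q y = y\<close> by metis
              then have "P (inv \<sigma> y) = inv \<sigma> y" using \<sigma>b by (simp add: bij_is_inj inj_eq)
              then show "y \<in> \<sigma> ` {x. P x = x}" using \<open>\<sigma> (inv \<sigma> y) = y\<close> by (metis (mono_tags) image_eqI mem_Collect_eq)
            qed
            ultimately have "infinite (\<sigma> ` {x. P x = x})" using finite_subset by blast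
            then show ?thesis by blast
          qed
        qed
        have G: "\<forall>T. finite T \<longrightarrow> infinite ((\<lambda>_. {x. P x = x}) T) \<and> (\<lambda>_. {x. P x = x}) T \<subseteq> {x. P x = x}"
          using infP by simp
        obtain ws A where wsA: "pathok (eval_word \<rho>) (eval_word \<rho>') A L ws" "distinct ws" "set ws \<inter> F = {}"
            "set ws \<subseteq> {x. P x = x}" "fst ` set A \<subseteq> set ws" "snd ` set A \<subseteq> {y. Q y = y} - \<sigma> ` F"
            "distinct (map fst A)" "distinct (map snd A)"
          using path_exists[OF inj1 inj2 infP zL(3) goodL F(1) finite_imageI[OF F(1)] G] by blast
        have Acond: "\<forall>(a, b)\<in>set A. P a = a \<and> Q b = b \<and> a \<notin> F \<and> b \<notin> \<sigma> ` F"
        proof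
          fix p assume "p \<in> set A"
          then have "fst p \<in> set ws" "snd p \<in> {y. Q y = y} - \<sigma> ` F" using wsA(5,6) by auto
          then show "case p of (a, b) \<Rightarrow> P a = a \<and> Q b = b \<and> a \<notin> F \<and> b \<notin> \<sigma> ` F"
            using wsA(3,4) by (cases p) auto
        qed
        obtain \<sigma>' where \<sigma>': "bij \<sigma>'" "\<forall>x. \<sigma>' (P x) = Q (\<sigma>' x)" "\<forall>x\<in>F. \<sigma>' x = \<sigma> x" "\<forall>(a, b)\<in>set A. \<sigma>' a = b"
          using extend[OF \<sigma>b \<sigma>c injQ wsA(7,8) Acond] by blast
        have "\<sigma>' \<in> {\<sigma>. bij \<sigma> \<and> (\<forall>x. \<sigma> (P x) = Q (\<sigma> x))}" using \<sigma>'(1,2) by simp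
        then have \<sigma>'Z: "\<sigma>' \<in> Z" unfolding Zdef .
        have "\<sigma>' \<in> ?T interior_of ?B" using F(2) \<sigma>'Z \<sigma>'(1,3) by blast
        with interior_of_subset[of ?T ?B] have "\<sigma>' \<in> ?B" by (rule subsetD)
        then have EVid: "?EV \<sigma>' W = id" by simp
        have ev: "\<forall>s x. ?EV \<sigma>' (syl s) x = (if fst s then eval_word \<rho> (snd s) x
                    else inv \<sigma>' (eval_word \<rho>' (snd s) (\<sigma>' x)))"
          by (simp add: syl_def eval_emb_l eval_emb_r[OF \<sigma>'(1) rb'])
        have flatL: "?EV \<sigma>' (flat L) (last ws) = hd ws"
          by (rule realize[OF ev bij_is_inj[OF \<sigma>'(1)] \<sigma>'(4) wsA(1)])
        obtain s0 L0 where L: "L = s0 # L0" using False by (cases L) auto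
        obtain w ws' where ws: "ws = w # ws'" "ws' \<noteq> []" using wsA(1) unfolding L pathok.simps(2) by blast
        have hdP: "P (hd ws) = hd ws" using wsA(4) ws by auto
        have "?EV \<sigma>' W (last ws) = ?EV \<sigma>' (emb_l z @ flat L) (last ws)" using evamal[OF \<sigma>'Z zL(5)] by simp
        also have "\<dots> = eval_word \<rho> z (hd ws)" using flatL by (simp add: eval_emb_l)
        also have "\<dots> = hd ws" using cyc_fix[OF rb zL(2)] hdP unfolding P_def by blast
        finally have "?EV \<sigma>' W (last ws) = hd ws" .
        moreover have "hd ws \<noteq> last ws" using hd_last[OF wsA(2) ws] .
        ultimately show False using EVid by simp
      qed
    qed
  qed
  define Fk where "Fk k = (if from_nat k \<in> words_over ?Gens \<and> \<not> amal_eq c d (from_nat k) []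
      then {\<sigma>\<in>Z. ?EV \<sigma> (from_nat k) = id} else {})" for k
  show ?thesis
    unfolding generic_in_def top
  proof (intro conjI exI[of _ Fk] allI)
    show "{\<sigma> \<in> Z. gamma_faithful n m (fgen n \<alpha>) (fgen m \<alpha>') c d \<sigma>} \<subseteq> Z" by blast
    fix k
    show "closedin ?T (Fk k)" unfolding Fk_def using closed by auto
    show "?T interior_of Fk k = {}" unfolding Fk_def using nowhere by auto
  next
    show "Z - {\<sigma> \<in> Z. gamma_faithful n m (fgen n \<alpha>) (fgen m \<alpha>') c d \<sigma>} = (\<Union>k. Fk k)"
    proof
      show "Z - {\<sigma> \<in> Z. gamma_faithful n m (fgen n \<alpha>) (fgen m \<alpha>') c d \<sigma>} \<subseteq> (\<Union>k. Fk k)"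
      proof
        fix \<sigma> assume "\<sigma> \<in> Z - {\<sigma> \<in> Z. gamma_faithful n m (fgen n \<alpha>) (fgen m \<alpha>') c d \<sigma>}"
        then obtain W where "\<sigma> \<in> Z" "W \<in> words_over ?Gens" "?EV \<sigma> W = id" "\<not> amal_eq c d W []"
          unfolding gamma_faithful_def \<rho>_def \<rho>'_def by auto
        then have "\<sigma> \<in> Fk (to_nat W)" unfolding Fk_def by simp
        then show "\<sigma> \<in> (\<Union>k. Fk k)" by blast
      qed
      show "(\<Union>k. Fk k) \<subseteq> Z - {\<sigma> \<in> Z. gamma_faithful n m (fgen n \<alpha>) (fgen m \<alpha>') c d \<sigma>}"
        unfolding Fk_def gamma_faithful_def \<rho>_def \<rho>'_def by (auto split: if_splits)
    qed
  qed
qed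

end
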